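(* Let $S$ be a MANS-semigroup with $\mathrm{msg}(S)=\{n_1<n_2<\cdots<n_e<n_{e+1}\}$, where $e\geq 2$. Then $S'=\langle n_1,n_2,\ldots,n_e\rangle$ is a MANS-semigroup with $\mathrm{e}(S')=\mathrm{e}(S)-1$.
   Context: $\mathbb{N}=\{0,1,2,\ldots\}$. A numerical semigroup is a subset $S\subseteq\mathbb{N}$ closed under addition, containing $0$, with $\mathbb{N}\setminus S$ finite; $\langle A\rangle$ is the submonoid generated by $A$; $\mathrm{msg}(S)$ is the unique finite minimal system of generators and $\mathrm{e}(S)=|\mathrm{msg}(S)|$. $S$ is a MANS-semigroup if $w(1)<\cdots<w(\mathrm{m}(S)-1)$, where $\mathrm{m}(S)$ is the least element of $S\setminus\{0\}$ and $w(i)$ the least element of $S$ congruent to $i$ modulo $\mathrm{m}(S)$. *)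

theory Defs
  imports Main
begin

definition numerical_semigroup :: "nat set \<Rightarrow> bool" where
  "numerical_semigroup S \<longleftrightarrow>
     0 \<in> S \<and> (\<forall>x\<in>S. \<forall>y\<in>S. x + y \<in> S) \<and> finite (UNIV - S)"

inductive_set monoid_gen :: "nat set \<Rightarrow> nat set" for A :: "nat set" where
  zero: "0 \<in> monoid_gen A"
| step: "a \<in> A \<Longrightarrow> x \<in> monoid_gen A \<Longrightarrow> a + x \<in> monoid_gen A"

definition is_minimal_gen_system :: "nat set \<Rightarrow> nat set \<Rightarrow> bool" where
  "is_minimal_gen_system A S \<longleftrightarrow>
     monoid_gen A = S \<and> (\<forall>B. B \<subset> A \<longrightarrow> monoid_gen B \<noteq> S)"

definition msg :: "nat set \<Rightarrow> nat set" where
  "msg S = (THE A. finite A \<and> is_minimal_gen_system A S)"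

definition embdim :: "nat set \<Rightarrow> nat" where
  "embdim S = card (msg S)"

definition multiplicity :: "nat set \<Rightarrow> nat" where
  "multiplicity S = (LEAST x. x \<in> S \<and> x \<noteq> 0)"

definition apery_w :: "nat set \<Rightarrow> nat \<Rightarrow> nat" where
  "apery_w S i = (LEAST x. x \<in> S \<and> x mod multiplicity S = i mod multiplicity S)"

definition MANS :: "nat set \<Rightarrow> bool" where
  "MANS S \<longleftrightarrow> numerical_semigroup S \<and>
     (\<forall>i j. 1 \<le> i \<longrightarrow> i < j \<longrightarrow> j \<le> multiplicity S - 1 \<longrightarrow> apery_w S i < apery_w S j)"

end

theory Submission imports Defs begin

lemma mg_add: "x \<in> monoid_gen A \<Longrightarrow> y \<in> monoid_gen A \<Longrightarrow> x + y \<in> monoid_gen A"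
  by (induction x rule: monoid_gen.induct) (auto simp: add.assoc intro: monoid_gen.step)

lemma mg_gen: "a \<in> A \<Longrightarrow> a \<in> monoid_gen A"
  using monoid_gen.step[OF _ monoid_gen.zero] by fastforce

lemma mg_least: "A \<subseteq> T \<Longrightarrow> 0 \<in> T \<Longrightarrow> (\<forall>x\<in>T. \<forall>y\<in>T. x + y \<in> T) \<Longrightarrow> monoid_gen A \<subseteq> T"
proof
  fix x assume h: "A \<subseteq> T" "0 \<in> T" "\<forall>x\<in>T. \<forall>y\<in>T. x + y \<in> T" and x: "x \<in> monoid_gen A"
  from x show "x \<in> T" by (induction x rule: monoid_gen.induct) (use h in auto)
qed

lemma mg_mono: "A \<subseteq> B \<Longrightarrow> monoid_gen A \<subseteq> monoid_gen B"
  by (rule mg_least) (auto intro: mg_gen monoid_gen.zero mg_add)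

definition gens :: "nat set \<Rightarrow> nat set" where
  "gens S = {x \<in> S. x \<noteq> 0 \<and> (\<forall>s\<in>S. \<forall>t\<in>S. x = s + t \<longrightarrow> s = 0 \<or> t = 0)}"

lemma mg_remove0: "monoid_gen A \<subseteq> monoid_gen (A - {0})"
proof
  fix x assume "x \<in> monoid_gen A"
  then show "x \<in> monoid_gen (A - {0})"
  proof (induction x rule: monoid_gen.induct)
    case (step a x) then show ?case by (cases "a = 0") (auto intro: monoid_gen.intros)
  qed (rule monoid_gen.zero)
qed

lemma mg_below:
  assumes "y \<in> monoid_gen A"
  shows "y < a \<Longrightarrow> y \<in> monoid_gen (A - {a})"
  using assms
proof (induction y rule: monoid_gen.induct)
  case zero show ?case by (rule monoid_gen.zero)
next
  case (step b x)
  then show ?case by (auto intro: monoid_gen.step)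
qed

lemma uniq:
  assumes "is_minimal_gen_system A S"
  shows "A = gens S"
proof -
  have gen: "monoid_gen A = S" and mn: "\<And>B. B \<subset> A \<Longrightarrow> monoid_gen B \<noteq> S"
    using assms unfolding is_minimal_gen_system_def by auto
  have AS: "A \<subseteq> S" using gen mg_gen by blast
  have n0: "0 \<notin> A"
  proof
    assume "0 \<in> A"
    then have "A - {0} \<subset> A" by auto
    moreover have "monoid_gen (A - {0}) = S"
      using mg_remove0[of A] mg_mono[of "A - {0}" A] gen by auto
    ultimately show False using mn by blast
  qed
  show ?thesis
  proof
    show "A \<subseteq> gens S"
    proof
      fix a assume aA: "a \<in> A"
      show "a \<in> gens S"
      proof (rule ccontr)
        assume "a \<notin> gens S"
        then obtain s t where st: "s \<in> S" "t \<in> S" "a = s + t" "s \<noteq> 0" "t \<noteq> 0"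
          using aA AS n0 unfolding gens_def by auto
        have "s \<in> monoid_gen (A - {a})" "t \<in> monoid_gen (A - {a})"
          using mg_below[of s A a] mg_below[of t A a] st gen by auto
        then have a2: "a \<in> monoid_gen (A - {a})" using st mg_add by simp
        have "monoid_gen A \<subseteq> monoid_gen (A - {a})"
          apply (rule mg_least)
          using a2 by (auto intro: mg_gen monoid_gen.zero mg_add)
        then have "monoid_gen (A - {a}) = S" using mg_mono[of "A - {a}" A] gen by auto
        moreover have "A - {a} \<subset> A" using aA by auto
        ultimately show False using mn by blast
      qed
    qed
  next
    show "gens S \<subseteq> A"
    proof
      fix g assume g: "g \<in> gens S"
      then have "g \<in> monoid_gen A" "g \<noteq> 0" using gen unfolding gens_def by auto
      then show "g \<in> A"
      proof (cases rule: monoid_gen.cases)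
        case (step a x)
        then have "a \<in> S" "x \<in> S" using AS gen by auto
        then have "a = 0 \<or> x = 0" using g step unfolding gens_def by auto
        then show ?thesis using step n0 by auto
      qed auto
    qed
  qed
qed

lemma msg_eq:
  assumes "finite A" "is_minimal_gen_system A S"
  shows "msg S = A"
  unfolding msg_def
  by (rule the_equality) (use assms uniq in auto)

lemma gens_min: "A \<subseteq> gens T \<Longrightarrow> monoid_gen A \<subseteq> T \<Longrightarrow> is_minimal_gen_system A (monoid_gen A)"
  unfolding is_minimal_gen_system_def
proof (intro conjI allI impI refl notI)
  fix B assume AG: "A \<subseteq> gens T" and MT: "monoid_gen A \<subseteq> T" and BA: "B \<subset> A" and eq: "monoid_gen B = monoid_gen A"
  then obtain a where a: "a \<in> A" "a \<notin> B" by auto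
  then have "a \<in> monoid_gen B" using eq mg_gen by auto
  then show False
  proof (cases rule: monoid_gen.cases)
    case zero then show ?thesis using a AG unfolding gens_def by auto
  next
    case (step b x)
    have "b \<in> T" "x \<in> T" "b \<noteq> 0" using step BA AG MT eq mg_gen unfolding gens_def by auto
    moreover have "a \<in> gens T" using a AG by auto
    ultimately show False using step a unfolding gens_def by auto
  qed
qed


lemma mult_in: "m \<in> (S::nat set) \<Longrightarrow> 0 \<in> S \<Longrightarrow> (\<forall>x\<in>S. \<forall>y\<in>S. x + y \<in> S) \<Longrightarrow> k * m \<in> S"
  by (induction k) auto

lemma ns_bound: "numerical_semigroup S \<Longrightarrow> \<exists>N. \<forall>x\<ge>N. x \<in> S"
proof -
  assume "numerical_semigroup S"
  then have f: "finite (UNIV - S)" unfolding numerical_semigroup_def by auto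
  obtain N where "\<forall>x\<in>UNIV - S. x < N"
    using f by (auto simp: finite_nat_set_iff_bounded)
  then show ?thesis by (metis DiffI UNIV_I not_le)
qed

lemma mg_ge:
  assumes "x \<in> monoid_gen A" "x \<noteq> 0" shows "\<exists>a\<in>A. a \<le> x"
  using assms(1)
proof (cases rule: monoid_gen.cases)
  case (step a y)
  then show ?thesis using le_add1[of a y] by blast
qed (use assms in auto)

lemma decomp:
  assumes "x \<in> monoid_gen A"
  shows "x mod m \<noteq> 0 \<Longrightarrow> \<exists>a\<in>A. a mod m \<noteq> 0 \<and> a \<le> x \<and> x - a \<in> monoid_gen A"
  using assms
proof (induction x rule: monoid_gen.induct)
  case zero then show ?case by simp
next
  case (step a x)
  show ?case
  proof (cases "a mod m = 0")
    case False then show ?thesis using step by auto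
  next
    case True
    then have "x mod m \<noteq> 0" using step.prems by (metis mod_add_left_eq add_0)
    then obtain b where b: "b \<in> A" "b mod m \<noteq> 0" "b \<le> x" "x - b \<in> monoid_gen A"
      using step.IH by auto
    have "a + x - b = a + (x - b)" using b by simp
    moreover have "a + (x - b) \<in> monoid_gen A" by (rule monoid_gen.step) (use b step.hyps in auto)
    ultimately have "a + x - b \<in> monoid_gen A" by simp
    then show ?thesis using b by (intro bexI[of _ b]) auto
  qed
qed

lemma modarith:
  fixes z a v m i :: nat
  assumes "(z + a) mod m = i + 1" "i + 1 < m" "a mod m = v mod m + 1"
  shows "(z + v) mod m = i"
proof -
  have "(z + v + 1) mod m = (z + (v + 1)) mod m" by simp
  also have "\<dots> = (z + a) mod m"
    using assms(3) by (metis mod_add_cong mod_add_self2 mod_add_left_eq)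
  finally have h: "(z + v + 1) mod m = i + 1" using assms(1) by simp
  show ?thesis
    using h assms(2) by (auto simp: mod_Suc split: if_splits)
qed

lemma gens_nz:
  assumes "a \<in> gens S" "m \<in> S" "0 < m" "a \<noteq> m" "0 \<in> S" "\<forall>x\<in>S. \<forall>y\<in>S. x + y \<in> S"
  shows "a mod m \<noteq> 0"
proof
  assume "a mod m = 0"
  then obtain k where k: "a = k * m" by (metis mult.commute mod_eq_0_iff_dvd dvdE)
  have "a \<noteq> 0" using assms(1) unfolding gens_def by auto
  then have "k \<ge> 2" using k assms(4) by (cases k) auto
  then have "a = m + (k - 1) * m" using k by (cases k) auto
  moreover have "(k - 1) * m \<in> S" using mult_in assms by blast
  moreover have "(k - 1) * m \<noteq> 0" using \<open>k \<ge> 2\<close> assms(3) by simp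
  ultimately show False using assms unfolding gens_def by auto
qed

lemma ns_msg:
  assumes "numerical_semigroup S"
  shows "msg S = gens S" "monoid_gen (gens S) = S"
proof -
  have z: "0 \<in> S" and c: "\<forall>x\<in>S. \<forall>y\<in>S. x + y \<in> S" using assms unfolding numerical_semigroup_def by auto
  have sub: "monoid_gen (gens S) \<subseteq> S" by (rule mg_least) (use z c in \<open>auto simp: gens_def\<close>)
  have sup: "x \<in> S \<Longrightarrow> x \<in> monoid_gen (gens S)" for x
  proof (induction x rule: less_induct)
    case (less x)
    show ?case
    proof (cases "x = 0")
      case True then show ?thesis by (simp add: monoid_gen.zero)
    next
      case False
      show ?thesis
      proof (cases "x \<in> gens S")
        case True then show ?thesis by (rule mg_gen)
      next
        case nG: False
        then obtain s t where "s \<in> S" "t \<in> S" "x = s + t" "s \<noteq> 0" "t \<noteq> 0"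
          using False less.prems unfolding gens_def by auto
        then show ?thesis using less.IH[of s] less.IH[of t] mg_add by auto
      qed
    qed
  qed
  show eq: "monoid_gen (gens S) = S" using sub sup by auto
  obtain N where N: "\<forall>x\<ge>N. x \<in> S" using ns_bound assms by blast
  have "N + 1 \<in> S" "N + 1 \<noteq> 0" using N by auto
  have fin: "finite (gens S)"
  proof (rule finite_subset)
    show "gens S \<subseteq> {..N + (N + 1)}"
    proof
      fix x assume x: "x \<in> gens S"
      show "x \<in> {..N + (N + 1)}"
      proof (rule ccontr)
        assume "x \<notin> {..N + (N + 1)}"
        then have "x = (N + 1) + (x - (N + 1))" "x - (N + 1) \<in> S" "x - (N + 1) \<noteq> 0" using N by auto
        moreover have "\<forall>s\<in>S. \<forall>t\<in>S. x = s + t \<longrightarrow> s = 0 \<or> t = 0" using x unfolding gens_def by auto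
        ultimately show False using \<open>N + 1 \<in> S\<close> by force
      qed
    qed
  qed simp
  have "is_minimal_gen_system (gens S) S"
    using gens_min[of "gens S" S] sub eq by auto
  then show "msg S = gens S" using msg_eq fin by blast
qed

theorem lemma4p2:
  fixes S :: "nat set" and n :: "nat \<Rightarrow> nat" and e :: nat
  assumes "MANS S"
    and "e \<ge> 2"
    and "strict_mono_on {1..e+1} n"
    and "msg S = n ` {1..e+1}"
  shows "MANS (monoid_gen (n ` {1..e})) \<and>
         embdim (monoid_gen (n ` {1..e})) = embdim S - 1"
proof -
  let ?A = "n ` {1..e+1}"
  let ?B = "n ` {1..e}"
  define S' where "S' = monoid_gen ?B"
  define m where "m = n 1"
  have ns: "numerical_semigroup S" using assms(1) unfolding MANS_def by auto
  have z: "0 \<in> S" and cl: "\<forall>x\<in>S. \<forall>y\<in>S. x + y \<in> S" using ns unfolding numerical_semigroup_def by auto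
  have G: "gens S = ?A" using ns_msg(1)[OF ns] assms(4) by simp
  have SG: "monoid_gen ?A = S" using ns_msg(2)[OF ns] G by simp
  have mono: "\<And>i j. i \<in> {1..e+1} \<Longrightarrow> j \<in> {1..e+1} \<Longrightarrow> i < j \<Longrightarrow> n i < n j"
    using assms(3) unfolding strict_mono_on_def by blast
  have nle: "\<And>i. i \<in> {1..e+1} \<Longrightarrow> m \<le> n i"
  proof -
    fix i assume i: "i \<in> {1..e+1}"
    show "m \<le> n i"
    proof (cases "i = 1")
      case False
      then have "1 < i" using i by auto
      then have "n 1 < n i" using mono[of 1 i] i by auto
      then show ?thesis unfolding m_def by simp
    qed (simp add: m_def)
  qed
  have ngen: "\<And>i. i \<in> {1..e+1} \<Longrightarrow> n i \<in> gens S" using G by auto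
  have nS: "\<And>i. i \<in> {1..e+1} \<Longrightarrow> n i \<in> S" using ngen unfolding gens_def by auto
  have mpos: "0 < m" using ngen[of 1] unfolding gens_def m_def by auto
  have mS: "m \<in> S" using nS[of 1] m_def by auto
  have multS: "multiplicity S = m"
    unfolding multiplicity_def
  proof (rule Least_equality)
    show "m \<in> S \<and> m \<noteq> 0" using mS mpos by auto
  next
    fix y assume y: "y \<in> S \<and> y \<noteq> 0"
    then obtain a where "a \<in> ?A" "a \<le> y" using mg_ge[of y ?A] SG by auto
    then obtain k where "k \<in> {1..e+1}" "n k \<le> y" by blast
    then show "m \<le> y" using nle[of k] by linarith
  qed
  have "?B \<subseteq> ?A" by auto
  then have S'S: "S' \<subseteq> S" using mg_mono[of ?B ?A] SG unfolding S'_def by blast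
  have below: "\<And>z. z \<in> S \<Longrightarrow> z < n (e+1) \<Longrightarrow> z \<in> S'"
  proof -
    fix z assume zS: "z \<in> S" and zl: "z < n (e+1)"
    have "z \<in> monoid_gen ?A" using SG zS by simp
    then show "z \<in> S'" using zl
    proof (induction z rule: monoid_gen.induct)
      case zero show ?case unfolding S'_def by (rule monoid_gen.zero)
    next
      case (step a x)
      then obtain k where k: "k \<in> {1..e+1}" "a = n k" by auto
      have "k \<noteq> e + 1" using k step.prems by auto
      then have "a \<in> ?B" using k by auto
      moreover have "x \<in> S'" using step by auto
      ultimately show ?case unfolding S'_def by (rule monoid_gen.step)
    qed
  qed
  have nz: "\<And>i. i \<in> {2..e+1} \<Longrightarrow> n i mod m \<noteq> 0"
  proof -
    fix i assume i: "i \<in> {2..e+1}"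
    have "n i \<noteq> m" using mono[of 1 i] i unfolding m_def by auto
    then show "n i mod m \<noteq> 0" using gens_nz[OF ngen[of i] mS mpos _ z cl] i by auto
  qed
  have m2: "m \<ge> 2"
  proof (rule ccontr)
    assume "\<not> m \<ge> 2"
    then have "m = 1" using mpos by auto
    then show False using nz[of 2] assms(2) by auto
  qed
  obtain N where N: "\<forall>x\<ge>N. x \<in> S" using ns_bound[OF ns] by blast
  have wS: "\<And>i. apery_w S i \<in> S \<and> apery_w S i mod m = i mod m"
  proof -
    fix i
    have "N \<le> N * m" using mpos by simp
    then have "N * m + i mod m \<ge> N" by linarith
    then have "N * m + i mod m \<in> S \<and> (N * m + i mod m) mod m = i mod m" using N by simp
    then show "apery_w S i \<in> S \<and> apery_w S i mod m = i mod m"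
      unfolding apery_w_def multS by (rule LeastI)
  qed
  have wle: "\<And>i x. x \<in> S \<Longrightarrow> x mod m = i mod m \<Longrightarrow> apery_w S i \<le> x"
    unfolding apery_w_def multS by (rule Least_le) simp
  have wmono: "\<And>i j. 1 \<le> i \<Longrightarrow> i < j \<Longrightarrow> j \<le> m - 1 \<Longrightarrow> apery_w S i < apery_w S j"
    using assms(1) unfolding MANS_def multS by blast
  have below2: "\<And>j. j \<in> {1..e} \<Longrightarrow> n j < n (e+1)"
  proof -
    fix j assume "j \<in> {1..e}"
    then show "n j < n (e+1)" using mono[of j "e+1"] by simp
  qed
  have sub1: "\<And>r a. a \<in> S \<Longrightarrow> a < n (e+1) \<Longrightarrow> r = a mod m \<Longrightarrow> r \<noteq> 0 \<Longrightarrow>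
     \<exists>v. v \<in> S' \<and> v < a \<and> a mod m = v mod m + 1"
  proof -
    fix r a assume a: "a \<in> S" "a < n (e+1)" "r = a mod m" "r \<noteq> 0"
    have rm: "r < m" using a mpos by auto
    show "\<exists>v. v \<in> S' \<and> v < a \<and> a mod m = v mod m + 1"
    proof (cases "r = 1")
      case True
      then have "0 < a" using a by (auto intro: Nat.gr0I)
      then show ?thesis using True a unfolding S'_def by (intro exI[of _ 0]) (auto intro: monoid_gen.zero)
    next
      case False
      define v where "v = apery_w S (r - 1)"
      have "v < apery_w S r" unfolding v_def using wmono[of "r - 1" r] False a rm by auto
      also have "apery_w S r \<le> a" using wle[of a r] a by simp
      finally have va: "v < a" .
      have vS: "v \<in> S" "v mod m = (r - 1) mod m" using wS unfolding v_def by auto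
      have "v \<in> S'" using below vS va a by auto
      moreover have "a mod m = v mod m + 1" using vS a rm False by simp
      ultimately show ?thesis using va by blast
    qed
  qed
  define u where "u = apery_w S 1"
  have u1: "u mod m = 1" using wS[of 1] m2 unfolding u_def by simp
  have uS': "u \<in> S'"
  proof -
    define r where "r = n 2 mod m"
    have r0: "r \<noteq> 0" using nz[of 2] assms(2) r_def by auto
    have rm: "r < m" using r_def mpos by auto
    have "u \<le> apery_w S r"
    proof (cases "r = 1")
      case False
      then have "1 < r" "r \<le> m - 1" using r0 rm by auto
      then show ?thesis using wmono[of 1 r] unfolding u_def by simp
    qed (simp add: u_def)
    also have "apery_w S r \<le> n 2" using wle[of "n 2" r] nS[of 2] assms(2) r_def by simp
    also have "n 2 < n (e + 1)" using below2[of 2] assms(2) by auto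
    finally show ?thesis using below wS[of 1] u_def by auto
  qed
  have mS': "m \<in> S'" unfolding S'_def m_def using assms(2) by (intro mg_gen) auto
  have S'0: "0 \<in> S'" unfolding S'_def by (rule monoid_gen.zero)
  have S'cl: "\<forall>x\<in>S'. \<forall>y\<in>S'. x + y \<in> S'" unfolding S'_def using mg_add by blast
  have S'big: "\<And>x. x \<ge> m * u \<Longrightarrow> x \<in> S'"
  proof -
    fix x assume x: "x \<ge> m * u"
    define k where "k = x mod m"
    have km: "k < m" using mpos k_def by auto
    have "k * u \<le> m * u" using km by auto
    then have ku: "k * u \<le> x" using x by linarith
    have "(k * u) mod m = (k * (u mod m)) mod m" by (simp add: mod_mult_right_eq)
    also have "\<dots> = k" using u1 km by simp
    finally have "x mod m = (k * u) mod m" using k_def by simp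
    then have "m dvd x - k * u" using mod_eq_dvd_iff_nat[OF ku] by simp
    then obtain q where q: "x - k * u = q * m" by (metis dvdE mult.commute)
    have "k * u \<in> S'" "q * m \<in> S'" using mult_in uS' mS' S'0 S'cl by blast+
    then have "k * u + q * m \<in> S'" using S'cl by blast
    moreover have "x = k * u + q * m" using q ku by linarith
    ultimately show "x \<in> S'" by simp
  qed
  have nsS': "numerical_semigroup S'"
    unfolding numerical_semigroup_def
  proof (intro conjI S'0 S'cl)
    have "UNIV - S' \<subseteq> {..<m * u}" using S'big not_le by blast
    then show "finite (UNIV - S')" using finite_subset by blast
  qed
  have multS': "multiplicity S' = m"
    unfolding multiplicity_def
  proof (rule Least_equality)
    show "m \<in> S' \<and> m \<noteq> 0" using mS' mpos by auto
  next
    fix y assume y: "y \<in> S' \<and> y \<noteq> 0"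
    then obtain a where "a \<in> ?B" "a \<le> y" using mg_ge[of y ?B] S'_def by auto
    then obtain k where "k \<in> {1..e}" "n k \<le> y" by blast
    then show "m \<le> y" using nle[of k] by simp
  qed
  have w'S: "\<And>i. apery_w S' i \<in> S' \<and> apery_w S' i mod m = i mod m"
  proof -
    fix i
    have "m * u + i mod m \<in> S' \<and> (m * u + i mod m) mod m = i mod m" using S'big by simp
    then show "apery_w S' i \<in> S' \<and> apery_w S' i mod m = i mod m"
      unfolding apery_w_def multS' by (rule LeastI)
  qed
  have w'le: "\<And>i x. x \<in> S' \<Longrightarrow> x mod m = i mod m \<Longrightarrow> apery_w S' i \<le> x"
    unfolding apery_w_def multS' by (rule Least_le) simp
  have stp: "\<And>i. 1 \<le> i \<Longrightarrow> i + 1 \<le> m - 1 \<Longrightarrow> apery_w S' i < apery_w S' (i + 1)"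
  proof -
    fix i assume i: "1 \<le> i" "i + 1 \<le> m - 1"
    define x where "x = apery_w S' (i + 1)"
    have xS: "x \<in> S'" and xm: "x mod m = i + 1" using w'S[of "i+1"] i unfolding x_def by auto
    obtain a where a: "a \<in> ?B" "a mod m \<noteq> 0" "a \<le> x" "x - a \<in> S'"
      using decomp[of x ?B m] xS xm unfolding S'_def by auto
    have "a \<in> S" "a < n (e+1)" using a(1) nS below2 by auto
    then obtain v where v: "v \<in> S'" "v < a" "a mod m = v mod m + 1"
      using sub1 a(2) by blast
    define y where "y = (x - a) + v"
    have yS: "y \<in> S'" using S'cl a(4) v(1) y_def by blast
    have yx: "y < x" using y_def v(2) a(3) by linarith
    have "((x - a) + a) mod m = i + 1" using a(3) xm by simp
    then have "y mod m = i" unfolding y_def using modarith[of "x - a" a m i v] i v(3) by linarith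
    then have "apery_w S' i \<le> y" using w'le[OF yS] i m2 by simp
    then show "apery_w S' i < apery_w S' (i + 1)" using yx x_def by linarith
  qed
  have mans: "\<forall>i. 1 \<le> i \<longrightarrow> i < j \<longrightarrow> j \<le> m - 1 \<longrightarrow> apery_w S' i < apery_w S' j" for j
  proof (induction j)
    case 0 then show ?case by simp
  next
    case (Suc j)
    show ?case
    proof (intro allI impI)
      fix i assume i: "1 \<le> i" "i < Suc j" "Suc j \<le> m - 1"
      show "apery_w S' i < apery_w S' (Suc j)"
      proof (cases "i = j")
        case True then show ?thesis using stp[of i] i by simp
      next
        case False
        then have "apery_w S' i < apery_w S' j" using Suc.IH i by auto
        also have "\<dots> < apery_w S' (Suc j)" using stp[of j] i False by simp
        finally show ?thesis .
      qed
    qed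
  qed
  have MS': "MANS S'" unfolding MANS_def multS' using nsS' mans by blast
  have fB: "finite ?B" by simp
  have "?B \<subseteq> gens S" using ngen by auto
  then have "is_minimal_gen_system ?B S'"
    using gens_min[of ?B S] S'S unfolding S'_def by blast
  then have msg': "msg S' = ?B" using msg_eq fB by blast
  have inj: "inj_on n {1..e+1}" using strict_mono_on_imp_inj_on[OF assms(3)] .
  have c1: "card ?A = e + 1" using card_image[OF inj] by simp
  have "inj_on n {1..e}" using inj_on_subset[OF inj] by auto
  then have c2: "card ?B = e" using card_image by fastforce
  have "embdim S' = embdim S - 1" unfolding embdim_def msg' assms(4) c1 c2 by simp
  then show ?thesis using MS' unfolding S'_def by simp
qed

end
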